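(* If a real symmetric matrix has symmetric tropical rank two, then it has tropical rank two.
   Context: For an $r\times r$ submatrix of a real matrix $A$ with row index set $I$ and column index set $J$, each bijection $\rho:I\to J$ has value $\sum_{i\in I}A_{i,\rho(i)}$; the submatrix is tropically singular if the minimum value is attained by at least two distinct bijections. For symmetric $A$, the submatrix is symmetrically tropically singular if the minimum is attained by at least two distinct monomials $\prod_{i\in I}X_{i,\rho(i)}$, where variables are subject to the identification $X_{i,j}=X_{j,i}$. The tropical rank (resp. symmetric tropical rank) of $A$ is the largest $r$ such that $A$ has an $r\times r$ submatrix (arbitrary row and column sets) that is not tropically singular (resp. not symmetrically tropically singular). *)

theory Defs
  imports Complex_Main "HOL-Library.Multiset"
begin

text \<open>Matrices are functions nat => nat => real; an m x n matrix uses rows {..<m}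
  and columns {..<n}.  A submatrix is given by a row set I and a column set J
  of equal cardinality.\<close>

definition trop_value :: "(nat \<Rightarrow> nat \<Rightarrow> real) \<Rightarrow> nat set \<Rightarrow> (nat \<Rightarrow> nat) \<Rightarrow> real" where
  "trop_value A I \<rho> = (\<Sum>i\<in>I. A i (\<rho> i))"

definition trop_min_bij :: "(nat \<Rightarrow> nat \<Rightarrow> real) \<Rightarrow> nat set \<Rightarrow> nat set \<Rightarrow> (nat \<Rightarrow> nat) \<Rightarrow> bool" where
  "trop_min_bij A I J \<rho> \<longleftrightarrow> bij_betw \<rho> I J \<and>
     (\<forall>\<sigma>. bij_betw \<sigma> I J \<longrightarrow> trop_value A I \<rho> \<le> trop_value A I \<sigma>)"

definition trop_singular :: "(nat \<Rightarrow> nat \<Rightarrow> real) \<Rightarrow> nat set \<Rightarrow> nat set \<Rightarrow> bool" where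
  "trop_singular A I J \<longleftrightarrow> (\<exists>\<rho>1 \<rho>2. trop_min_bij A I J \<rho>1 \<and> trop_min_bij A I J \<rho>2 \<and>
      (\<exists>i\<in>I. \<rho>1 i \<noteq> \<rho>2 i))"

text \<open>The monomial prod_{i in I} X_{i,rho(i)} modulo X_{ij} = X_{ji}: a multiset of
  unordered pairs {i, rho i}.\<close>
definition sym_monomial :: "nat set \<Rightarrow> (nat \<Rightarrow> nat) \<Rightarrow> nat set multiset" where
  "sym_monomial I \<rho> = image_mset (\<lambda>i. {i, \<rho> i}) (mset_set I)"

definition sym_trop_singular :: "(nat \<Rightarrow> nat \<Rightarrow> real) \<Rightarrow> nat set \<Rightarrow> nat set \<Rightarrow> bool" where
  "sym_trop_singular A I J \<longleftrightarrow> (\<exists>\<rho>1 \<rho>2. trop_min_bij A I J \<rho>1 \<and> trop_min_bij A I J \<rho>2 \<and>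
      sym_monomial I \<rho>1 \<noteq> sym_monomial I \<rho>2)"

definition tropical_rank :: "nat \<Rightarrow> nat \<Rightarrow> (nat \<Rightarrow> nat \<Rightarrow> real) \<Rightarrow> nat" where
  "tropical_rank m n A = Max {r. \<exists>I J. I \<subseteq> {..<m} \<and> J \<subseteq> {..<n} \<and> card I = r \<and> card J = r
      \<and> \<not> trop_singular A I J}"

definition symmetric_tropical_rank :: "nat \<Rightarrow> (nat \<Rightarrow> nat \<Rightarrow> real) \<Rightarrow> nat" where
  "symmetric_tropical_rank n A = Max {r. \<exists>I J. I \<subseteq> {..<n} \<and> J \<subseteq> {..<n} \<and> card I = r \<and> card J = r
      \<and> \<not> sym_trop_singular A I J}"

definition symmetric_matrix :: "nat \<Rightarrow> (nat \<Rightarrow> nat \<Rightarrow> real) \<Rightarrow> bool" where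
  "symmetric_matrix n A \<longleftrightarrow> (\<forall>i<n. \<forall>j<n. A i j = A j i)"

end

theory Submission
  imports Defs
begin

lemma sym_mono_cong:
  assumes "\<forall>i\<in>I. r1 i = r2 i"
  shows "sym_monomial I r1 = sym_monomial I r2"
proof (cases "finite I")
  case True
  then show ?thesis unfolding sym_monomial_def
    by (intro image_mset_cong) (use assms in auto)
next
  case False
  then show ?thesis unfolding sym_monomial_def by simp
qed

lemma nonsing_imp:
  assumes "\<not> trop_singular A I J"
  shows "\<not> sym_trop_singular A I J"
proof
  assume "sym_trop_singular A I J"
  then obtain r1 r2 where h: "trop_min_bij A I J r1" "trop_min_bij A I J r2"
    "sym_monomial I r1 \<noteq> sym_monomial I r2"
    unfolding sym_trop_singular_def by blast
  have "\<exists>i\<in>I. r1 i \<noteq> r2 i" using h(3) sym_mono_cong by blast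
  then show False using assms h(1,2) unfolding trop_singular_def by blast
qed

lemma card2:
  assumes c: "card I = 2" and s: "trop_singular A I J"
  shows "sym_trop_singular A I J"
proof -
  obtain r1 r2 where h: "trop_min_bij A I J r1" "trop_min_bij A I J r2"
    "\<exists>i\<in>I. r1 i \<noteq> r2 i"
    using s unfolding trop_singular_def by blast
  obtain a b where ab: "I = {a, b}" "a \<noteq> b" using c by (meson card_2_iff)
  have b1: "bij_betw r1 I J" and b2: "bij_betw r2 I J"
    using h unfolding trop_min_bij_def by auto
  have J1: "J = {r1 a, r1 b}" using b1 ab by (auto simp: bij_betw_def)
  have J2: "J = {r2 a, r2 b}" using b2 ab by (auto simp: bij_betw_def)
  have i1: "r1 a \<noteq> r1 b" using b1 ab by (auto simp: bij_betw_def inj_on_def)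
  have i2: "r2 a \<noteq> r2 b" using b2 ab by (auto simp: bij_betw_def inj_on_def)
  have sw: "r2 a = r1 b \<and> r2 b = r1 a"
  proof -
    have "r2 a \<in> {r1 a, r1 b}" "r2 b \<in> {r1 a, r1 b}" using J1 J2 by auto
    moreover have "r1 a \<noteq> r2 a \<or> r1 b \<noteq> r2 b" using h(3) ab by auto
    ultimately show ?thesis using i1 i2 by auto
  qed
  have m1: "sym_monomial I r1 = {#{a, r1 a}, {b, r1 b}#}"
    using ab by (simp add: sym_monomial_def)
  have m2: "sym_monomial I r2 = {#{a, r1 b}, {b, r1 a}#}"
    using ab sw by (simp add: sym_monomial_def)
  have "sym_monomial I r1 \<noteq> sym_monomial I r2"
  proof
    assume "sym_monomial I r1 = sym_monomial I r2"
    then have "{a, r1 a} \<in># {#{a, r1 b}, {b, r1 a}#}" unfolding m1 m2 by (metis union_single_eq_member)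
    then have "{a, r1 a} = {a, r1 b} \<or> {a, r1 a} = {b, r1 a}" by simp
    then show False using ab(2) i1 by (auto simp: doubleton_eq_iff)
  qed
  then show ?thesis using h unfolding sym_trop_singular_def by blast
qed

theorem corollary1:
  fixes n :: nat and A :: "nat \<Rightarrow> nat \<Rightarrow> real"
  assumes "symmetric_matrix n A"
    and "symmetric_tropical_rank n A = 2"
  shows "tropical_rank n n A = 2"
proof -
  define S where "S = {r. \<exists>I J. I \<subseteq> {..<n} \<and> J \<subseteq> {..<n} \<and> card I = r \<and> card J = r
      \<and> \<not> sym_trop_singular A I J}"
  define T where "T = {r. \<exists>I J. I \<subseteq> {..<n} \<and> J \<subseteq> {..<n} \<and> card I = r \<and> card J = r
      \<and> \<not> trop_singular A I J}"
  have TS: "T \<subseteq> S"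
  proof
    fix r assume "r \<in> T"
    then obtain I J where IJ: "I \<subseteq> {..<n}" "J \<subseteq> {..<n}" "card I = r" "card J = r"
      "\<not> trop_singular A I J" unfolding T_def by blast
    then have "\<not> sym_trop_singular A I J" using nonsing_imp by blast
    then show "r \<in> S" unfolding S_def using IJ by blast
  qed
  have fS: "finite S"
  proof (rule finite_subset[of _ "{..n}"])
    show "S \<subseteq> {..n}" unfolding S_def
    proof
      fix r assume "r \<in> {r. \<exists>I J. I \<subseteq> {..<n} \<and> J \<subseteq> {..<n} \<and> card I = r \<and> card J = r
      \<and> \<not> sym_trop_singular A I J}"
      then obtain I where "I \<subseteq> {..<n}" "card I = r" by blast
      then have "r \<le> card {..<n}" using card_mono by blast
      then show "r \<in> {..n}" by simp
    qed
  qed simp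
  have fT: "finite T" using TS fS finite_subset by blast
  have e: "\<not> sym_trop_singular A {} {}"
    unfolding sym_trop_singular_def sym_monomial_def by simp
  have "0 \<in> S" unfolding S_def using e by force
  then have "Max S \<in> S" using fS by (intro Max_in) auto
  moreover have MS: "Max S = 2" using assms(2) unfolding symmetric_tropical_rank_def S_def by simp
  ultimately have "2 \<in> S" by simp
  then obtain I J where IJ: "I \<subseteq> {..<n}" "J \<subseteq> {..<n}" "card I = 2" "card J = 2"
      "\<not> sym_trop_singular A I J" unfolding S_def by blast
  then have "\<not> trop_singular A I J" using card2 by blast
  then have "2 \<in> T" unfolding T_def using IJ by blast
  have "Max T \<le> Max S" using TS fS \<open>2 \<in> T\<close> by (intro Max_mono) auto
  moreover have "2 \<le> Max T" using fT \<open>2 \<in> T\<close> by simp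
  ultimately have "Max T = 2" using MS by linarith
  then show ?thesis unfolding tropical_rank_def T_def by simp
qed

end
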